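(* The Max-Util objective is subject to strict-improvement by a manipulator $m^-$ (one who can only hide existing edges) over undirected networks. That is, there exist a number $k$ of coalitions, an undirected social network $G=\langle A,E\rangle$, an agent $m\in A$ and a manipulation in which $m$ removes some of the edges of $G$ incident to $m$, producing the reported network $G^m$, such that \[\min_{P\in O(G^m)} u(m,P) \;>\; \max_{P\in O(G)} u(m,P),\] where $O(\cdot)$ denotes the set of Max-Util solutions and $u(m,P)$ is computed in the true network $G$.
   Context: Let $A=\{a_1,\dots,a_n\}$ be a finite nonempty set of agents and $G=\langle A,E\rangle$ a graph without self-loops (the social network). $N(a)$ is the set of neighbours of $a$ in $G$. For a coalition $C\subseteq A$ with $a\in C$, $u(a,C)=|C\cap N(a)|$. For $0<k\le n$, $\Pi_k$ is the set of partitions of $A$ into exactly $k$ nonempty coalitions; for $P\in\Pi_k$, $u(a,P)=u(a,C)$ where $C\in P$ contains $a$. The Max-Util objective: $O(G)$ is the set of $P\in\Pi_k$ maximizing $\sum_{a\in A}u(a,P)$ (utilities computed in $G$). A manipulator $m\in A$ of type $m^-$ in an undirected network may remove any subset of the edges incident to $m$; the resulting network is $G^m$. The utility $u(m,P)$ of the manipulator is always computed with respect to his true neighbours in the original $G$. *)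

theory Defs
  imports Main "HOL-Library.Disjoint_Sets"
begin

definition undirected_graph :: "'a set \<Rightarrow> 'a set set \<Rightarrow> bool" where
  "undirected_graph A E \<longleftrightarrow> (\<forall>e\<in>E. e \<subseteq> A \<and> card e = 2)"

definition nbrs :: "'a set set \<Rightarrow> 'a \<Rightarrow> 'a set" where
  "nbrs E a = {b. {a, b} \<in> E \<and> b \<noteq> a}"

definition coalition_of :: "'a set set \<Rightarrow> 'a \<Rightarrow> 'a set" where
  "coalition_of P a = (THE C. C \<in> P \<and> a \<in> C)"

definition util :: "'a set set \<Rightarrow> 'a set set \<Rightarrow> 'a \<Rightarrow> nat" where
  "util E P a = card (coalition_of P a \<inter> nbrs E a)"

definition Pi_k :: "'a set \<Rightarrow> nat \<Rightarrow> 'a set set set" where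
  "Pi_k A k = {P. partition_on A P \<and> card P = k}"

definition welfare :: "'a set \<Rightarrow> 'a set set \<Rightarrow> 'a set set \<Rightarrow> nat" where
  "welfare A E P = (\<Sum>a\<in>A. util E P a)"

definition maxutil :: "'a set \<Rightarrow> 'a set set \<Rightarrow> nat \<Rightarrow> 'a set set set" where
  "maxutil A E k = {P \<in> Pi_k A k. \<forall>Q \<in> Pi_k A k. welfare A E Q \<le> welfare A E P}"

definition minus_manipulation :: "'a set set \<Rightarrow> 'a \<Rightarrow> 'a set set \<Rightarrow> bool" where
  "minus_manipulation E m E' \<longleftrightarrow> E' \<subseteq> E \<and> (\<forall>e \<in> E - E'. m \<in> e)"

end

theory Submission
  imports Defs
begin

definition valid :: "nat list \<Rightarrow> bool" where
  "valid xs = (\<forall>i<length xs. xs!i \<le> i \<and> xs!(xs!i) = xs!i)"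

fun ext :: "nat \<Rightarrow> nat \<Rightarrow> nat list \<Rightarrow> nat list \<Rightarrow> nat list list" where
  "ext 0 n reps xs = [xs]"
| "ext (Suc r) n reps xs = ext r (Suc n) (n # reps) (xs @ [n]) @ concat (map (\<lambda>c. ext r (Suc n) reps (xs @ [c])) reps)"

lemma ext_set: "set (ext (Suc m) n reps xs) = set (ext m (Suc n) (n # reps) (xs @ [n])) \<union> (\<Union>c\<in>set reps. set (ext m (Suc n) reps (xs @ [c])))"
  by simp

lemma ext_complete:
  "valid (xs @ ys) \<Longrightarrow> n = length xs \<Longrightarrow> set reps = {j. j < n \<and> xs!j = j}
   \<Longrightarrow> xs @ ys \<in> set (ext (length ys) n reps xs)"
proof (induction ys arbitrary: xs n reps)
  case Nil
  then show ?case by simp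
next
  case (Cons c ys)
  have vall: "\<forall>i<length (xs @ c # ys). (xs @ c # ys)!i \<le> i \<and> (xs @ c # ys)!((xs @ c # ys)!i) = (xs @ c # ys)!i"
    using Cons.prems(1) unfolding valid_def by blast
  have "n < length (xs @ c # ys)" using Cons.prems(2) by simp
  then have v: "(xs @ c # ys)!n \<le> n \<and> (xs @ c # ys)!((xs @ c # ys)!n) = (xs @ c # ys)!n"
    using vall by blast
  have cn0: "(xs @ c # ys)!n = c" using Cons.prems(2) by simp
  have c1: "c \<le> n" and c2: "(xs @ c # ys)!c = c" using v unfolding cn0 by simp_all
  have eq: "(xs @ [c]) @ ys = xs @ c # ys" by simp
  have v2: "valid ((xs @ [c]) @ ys)" using Cons.prems(1) by simp
  have nth1: "\<And>j. j < n \<Longrightarrow> (xs @ [c])!j = xs!j" using Cons.prems(2) by (simp add: nth_append)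
  have nth2: "(xs @ [c])!n = c" using Cons.prems(2) by simp
  have len: "length (c # ys) = Suc (length ys)" by simp
  show ?case
  proof (cases "c = n")
    case True
    have "set (n # reps) = {j. j < Suc n \<and> (xs @ [c])!j = j}"
    proof (rule set_eqI)
      fix j show "j \<in> set (n # reps) \<longleftrightarrow> j \<in> {j. j < Suc n \<and> (xs @ [c])!j = j}"
      proof (cases "j < n")
        case True then show ?thesis using Cons.prems(3) nth1[OF True] by simp
      next
        case False then show ?thesis using Cons.prems(3) nth2 \<open>c = n\<close> by (auto simp: less_Suc_eq)
      qed
    qed
    then have "(xs @ [c]) @ ys \<in> set (ext (length ys) (Suc n) (n # reps) (xs @ [c]))"
      using Cons.IH[OF v2, of "Suc n" "n # reps"] Cons.prems(2) by simp
    then have "xs @ c # ys \<in> set (ext (length ys) (Suc n) (n # reps) (xs @ [n]))"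
      unfolding eq using True by simp
    then show ?thesis unfolding len ext_set by (rule UnI1)
  next
    case False
    then have cn: "c < n" using c1 by simp
    have "xs!c = c" using c2 cn Cons.prems(2) by (simp add: nth_append)
    then have cr: "c \<in> set reps" using Cons.prems(3) cn by simp
    have "set reps = {j. j < Suc n \<and> (xs @ [c])!j = j}"
    proof (rule set_eqI)
      fix j show "j \<in> set reps \<longleftrightarrow> j \<in> {j. j < Suc n \<and> (xs @ [c])!j = j}"
      proof (cases "j < n")
        case True then show ?thesis using Cons.prems(3) nth1[OF True] by simp
      next
        case False then show ?thesis using Cons.prems(3) nth2 \<open>c \<noteq> n\<close> by (auto simp: less_Suc_eq)
      qed
    qed
    then have "(xs @ [c]) @ ys \<in> set (ext (length ys) (Suc n) reps (xs @ [c]))"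
      using Cons.IH[OF v2, of "Suc n" reps] Cons.prems(2) by simp
    then have "xs @ c # ys \<in> set (ext (length ys) (Suc n) reps (xs @ [c]))"
      unfolding eq .
    then have "xs @ c # ys \<in> (\<Union>c\<in>set reps. set (ext (length ys) (Suc n) reps (xs @ [c])))"
      using cr by (rule UN_I[rotated])
    then show ?thesis unfolding len ext_set by (rule UnI2)
  qed
qed

lemma coal_eq:
  assumes "partition_on A P" "C \<in> P" "a \<in> C"
  shows "coalition_of P a = C"
proof -
  have disj: "disjoint P" using partition_onD2[OF assms(1)] .
  have u: "\<And>D. D \<in> P \<and> a \<in> D \<Longrightarrow> D = C"
  proof -
    fix D assume "D \<in> P \<and> a \<in> D"
    then show "D = C" using disjointD[OF disj, of D C] assms(2,3) by blast
  qed
  show ?thesis unfolding coalition_of_def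
    by (rule the_equality) (use assms(2,3) u in blast)+
qed

lemma coal_in:
  assumes "partition_on A P" "a \<in> A"
  shows "coalition_of P a \<in> P \<and> a \<in> coalition_of P a"
proof -
  have "a \<in> \<Union>P" using partition_onD1[OF assms(1)] assms(2) by simp
  then obtain C where "C \<in> P" "a \<in> C" by blast
  then show ?thesis using coal_eq[OF assms(1)] by simp
qed

lemma coal_sub:
  assumes "partition_on A P" "a \<in> A"
  shows "coalition_of P a \<subseteq> A"
  using coal_in[OF assms] partition_onD1[OF assms(1)] by blast

definition rep :: "nat set set \<Rightarrow> nat \<Rightarrow> nat" where
  "rep P a = (LEAST b. b \<in> coalition_of P a)"

lemma rep_props:
  assumes "partition_on A P" "a \<in> A"
  shows "rep P a \<in> coalition_of P a" "rep P a \<le> a"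
  using LeastI[of "\<lambda>b. b \<in> coalition_of P a" a] Least_le[of "\<lambda>b. b \<in> coalition_of P a" a]
    coal_in[OF assms] unfolding rep_def by auto

lemma same_iff:
  assumes "partition_on A P" "a \<in> A" "b \<in> A"
  shows "b \<in> coalition_of P a \<longleftrightarrow> rep P a = rep P b"
proof
  assume "b \<in> coalition_of P a"
  then have "coalition_of P b = coalition_of P a"
    using coal_eq[OF assms(1)] coal_in[OF assms(1,2)] by blast
  then show "rep P a = rep P b" unfolding rep_def by simp
next
  assume e: "rep P a = rep P b"
  have "rep P a \<in> coalition_of P a \<inter> coalition_of P b"
    using rep_props(1)[OF assms(1,2)] rep_props(1)[OF assms(1,3)] e by simp
  then have "coalition_of P a = coalition_of P b"
    using coal_in[OF assms(1,2)] coal_in[OF assms(1,3)] partition_onD2[OF assms(1)]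
    by (auto simp: disjoint_def)
  then show "b \<in> coalition_of P a" using coal_in[OF assms(1,3)] by simp
qed

lemma rep_idem:
  assumes "partition_on A P" "a \<in> A"
  shows "rep P (rep P a) = rep P a" "rep P a \<in> A"
proof -
  show ra: "rep P a \<in> A" using rep_props(1)[OF assms] coal_sub[OF assms] by blast
  have "coalition_of P (rep P a) = coalition_of P a"
    using coal_eq[OF assms(1)] coal_in[OF assms] rep_props(1)[OF assms] by blast
  then show "rep P (rep P a) = rep P a" unfolding rep_def by simp
qed

definition fixc :: "nat list \<Rightarrow> nat" where
  "fixc xs = length (filter (\<lambda>i. xs!i = i) [0..<length xs])"

lemma rep_valid:
  assumes "partition_on {0..<n} P"
  shows "valid (map (rep P) [0..<n])"
  unfolding valid_def using rep_props(2)[OF assms] rep_idem[OF assms] by auto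

lemma rep_fixc:
  assumes "partition_on {0..<n} P"
  shows "fixc (map (rep P) [0..<n]) = card P"
proof -
  let ?A = "{0..<n}"
  let ?g = "\<lambda>C. (LEAST b. b \<in> C)"
  have "fixc (map (rep P) [0..<n]) = length (filter (\<lambda>i. rep P i = i) [0..<n])"
    unfolding fixc_def by (auto intro!: arg_cong[where f=length] filter_cong)
  also have "\<dots> = card (set (filter (\<lambda>i. rep P i = i) [0..<n]))"
    by (metis distinct_card distinct_filter distinct_upt)
  also have "set (filter (\<lambda>i. rep P i = i) [0..<n]) = rep P ` ?A"
  proof
    show "set (filter (\<lambda>i. rep P i = i) [0..<n]) \<subseteq> rep P ` ?A"
    proof
      fix i assume h: "i \<in> set (filter (\<lambda>i. rep P i = i) [0..<n])"
      then have "i \<in> ?A" "rep P i = i" by auto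
      then show "i \<in> rep P ` ?A" by (metis image_eqI)
    qed
    show "rep P ` ?A \<subseteq> set (filter (\<lambda>i. rep P i = i) [0..<n])"
    proof
      fix i assume "i \<in> rep P ` ?A"
      then obtain a where a: "a \<in> ?A" "i = rep P a" by blast
      have "rep P i = i" "i \<in> ?A" using rep_idem[OF assms a(1)] a(2) by simp_all
      then show "i \<in> set (filter (\<lambda>i. rep P i = i) [0..<n])" by simp
    qed
  qed
  also have "rep P ` ?A = ?g ` (coalition_of P ` ?A)"
    unfolding rep_def image_image by simp
  also have "coalition_of P ` ?A = P"
  proof
    show "coalition_of P ` ?A \<subseteq> P" using coal_in[OF assms] by blast
    show "P \<subseteq> coalition_of P ` ?A"
    proof
      fix D assume D: "D \<in> P"
      then obtain a where a: "a \<in> D" using partition_onD3[OF assms] by (metis equals0I)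
      then have "a \<in> ?A" using D partition_onD1[OF assms] by blast
      then show "D \<in> coalition_of P ` ?A" using coal_eq[OF assms D a] by force
    qed
  qed
  also have "card (?g ` P) = card P"
  proof (rule card_image)
    show "inj_on ?g P"
    proof (rule inj_onI)
      fix D1 D2 assume D: "D1 \<in> P" "D2 \<in> P" "?g D1 = ?g D2"
      obtain a1 where "a1 \<in> D1" using D(1) partition_onD3[OF assms] by (metis equals0I)
      then have "?g D1 \<in> D1" by (rule LeastI)
      obtain a2 where "a2 \<in> D2" using D(2) partition_onD3[OF assms] by (metis equals0I)
      then have "?g D2 \<in> D2" by (rule LeastI)
      show "D1 = D2" using \<open>?g D1 \<in> D1\<close> \<open>?g D2 \<in> D2\<close> D partition_onD2[OF assms]
        by (auto simp: disjoint_def)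
    qed
  qed
  finally show ?thesis .
qed

definition wl :: "nat list list \<Rightarrow> nat list \<Rightarrow> nat" where
  "wl NL xs = sum_list (map (\<lambda>a. length (filter (\<lambda>b. xs!b = xs!a) (NL!a))) [0..<8])"

lemma util_eq:
  assumes "partition_on {0..<n} P"
    and "\<forall>a<n. nbrs E a = set (NL!a) \<and> distinct (NL!a) \<and> set (NL!a) \<subseteq> {0..<n}"
    and "\<forall>a<n. \<forall>b<n. (b \<in> coalition_of P a \<longleftrightarrow> xs!a = xs!b)"
    and "a < n"
  shows "util E P a = length (filter (\<lambda>b. xs!b = xs!a) (NL!a))"
proof -
  have nb: "nbrs E a = set (NL!a)" and sub: "set (NL!a) \<subseteq> {0..<n}"
    using assms(2) assms(4) by auto
  have key: "\<And>x. x \<in> set (NL!a) \<Longrightarrow> (x \<in> coalition_of P a \<longleftrightarrow> xs!x = xs!a)"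
  proof -
    fix x assume "x \<in> set (NL!a)"
    then have "x < n" using sub by auto
    then show "x \<in> coalition_of P a \<longleftrightarrow> xs!x = xs!a" using assms(3) assms(4) by auto
  qed
  have "coalition_of P a \<inter> nbrs E a = set (filter (\<lambda>b. xs!b = xs!a) (NL!a))"
    unfolding nb using key by auto
  moreover have "card (set (filter (\<lambda>b. xs!b = xs!a) (NL!a))) = length (filter (\<lambda>b. xs!b = xs!a) (NL!a))"
    by (rule distinct_card) (use assms(2,4) in simp)
  ultimately show ?thesis unfolding util_def by simp
qed

lemma welfare_eq:
  assumes "partition_on {0..<8} P"
    and "\<forall>a<8. nbrs E a = set (NL!a) \<and> distinct (NL!a) \<and> set (NL!a) \<subseteq> {0..<8}"
    and "\<forall>a<8. \<forall>b<8. (b \<in> coalition_of P a \<longleftrightarrow> xs!a = xs!b)"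
  shows "welfare {0..<8} E P = wl NL xs"
proof -
  have "welfare {0..<8} E P = sum (util E P) (set [0..<8])"
    unfolding welfare_def by (simp only: atLeastLessThan_upt)
  also have "\<dots> = sum_list (map (util E P) [0..<8])" by (rule sum_set_upt_conv_sum_list_nat)
  also have "map (util E P) [0..<8] = map (\<lambda>a. length (filter (\<lambda>b. xs!b = xs!a) (NL!a))) [0..<8]"
  proof (rule map_cong)
    fix a assume "a \<in> set [0..<(8::nat)]"
    then have "a < 8" by simp
    then show "util E P a = length (filter (\<lambda>b. xs!b = xs!a) (NL!a))" by (rule util_eq[OF assms])
  qed simp
  also have "sum_list \<dots> = wl NL xs" unfolding wl_def ..
  finally show ?thesis .
qed


definition EG :: "nat set set" where
  "EG = {{0,1},{0,3},{0,4},{0,5},{0,6},{0,7},{1,3},{1,6},{2,4},{2,6},{2,7},{3,5},{4,6},{5,7},{6,7}}"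
definition EM :: "nat set set" where
  "EM = EG - {{0,4},{0,7}}"

definition NLG :: "nat list list" where
  "NLG = [[1,3,4,5,6,7],[0,3,6],[4,6,7],[0,1,5],[0,2,6],[0,3,7],[0,1,2,4,7],[0,2,5,6]]"
definition NLM :: "nat list list" where
  "NLM = [[1,3,5,6],[0,3,6],[4,6,7],[0,1,5],[2,6],[0,3,7],[0,1,2,4,7],[2,5,6]]"

definition ul :: "nat list \<Rightarrow> nat" where
  "ul xs = length (filter (\<lambda>b. xs!b = xs!0) (NLG!0))"

definition fE :: "nat \<Rightarrow> nat \<Rightarrow> nat \<Rightarrow> nat \<Rightarrow> nat \<Rightarrow> nat \<Rightarrow> nat \<Rightarrow> nat \<Rightarrow> nat" where
  "fE x0 x1 x2 x3 x4 x5 x6 x7 = of_bool (x0 = 0) + of_bool (x1 = 1) + of_bool (x2 = 2) + of_bool (x3 = 3) + of_bool (x4 = 4) + of_bool (x5 = 5) + of_bool (x6 = 6) + of_bool (x7 = 7)"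
definition uE :: "nat \<Rightarrow> nat \<Rightarrow> nat \<Rightarrow> nat \<Rightarrow> nat \<Rightarrow> nat \<Rightarrow> nat \<Rightarrow> nat \<Rightarrow> nat" where
  "uE x0 x1 x2 x3 x4 x5 x6 x7 = of_bool (x1 = x0) + of_bool (x3 = x0) + of_bool (x4 = x0) + of_bool (x5 = x0) + of_bool (x6 = x0) + of_bool (x7 = x0)"
definition WG :: "nat \<Rightarrow> nat \<Rightarrow> nat \<Rightarrow> nat \<Rightarrow> nat \<Rightarrow> nat \<Rightarrow> nat \<Rightarrow> nat \<Rightarrow> nat" where
  "WG x0 x1 x2 x3 x4 x5 x6 x7 = of_bool (x1 = x0) + of_bool (x3 = x0) + of_bool (x4 = x0) + of_bool (x5 = x0) + of_bool (x6 = x0) + of_bool (x7 = x0) + of_bool (x0 = x1) + of_bool (x3 = x1) + of_bool (x6 = x1) + of_bool (x4 = x2) + of_bool (x6 = x2) + of_bool (x7 = x2) + of_bool (x0 = x3) + of_bool (x1 = x3) + of_bool (x5 = x3) + of_bool (x0 = x4) + of_bool (x2 = x4) + of_bool (x6 = x4) + of_bool (x0 = x5) + of_bool (x3 = x5) + of_bool (x7 = x5) + of_bool (x0 = x6) + of_bool (x1 = x6) + of_bool (x2 = x6) + of_bool (x4 = x6) + of_bool (x7 = x6) + of_bool (x0 = x7) + of_bool (x2 = x7) + of_bool (x5 = x7) + of_bool (x6 = x7)"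
definition WM :: "nat \<Rightarrow> nat \<Rightarrow> nat \<Rightarrow> nat \<Rightarrow> nat \<Rightarrow> nat \<Rightarrow> nat \<Rightarrow> nat \<Rightarrow> nat" where
  "WM x0 x1 x2 x3 x4 x5 x6 x7 = of_bool (x1 = x0) + of_bool (x3 = x0) + of_bool (x5 = x0) + of_bool (x6 = x0) + of_bool (x0 = x1) + of_bool (x3 = x1) + of_bool (x6 = x1) + of_bool (x4 = x2) + of_bool (x6 = x2) + of_bool (x7 = x2) + of_bool (x0 = x3) + of_bool (x1 = x3) + of_bool (x5 = x3) + of_bool (x2 = x4) + of_bool (x6 = x4) + of_bool (x0 = x5) + of_bool (x3 = x5) + of_bool (x7 = x5) + of_bool (x0 = x6) + of_bool (x1 = x6) + of_bool (x2 = x6) + of_bool (x4 = x6) + of_bool (x7 = x6) + of_bool (x2 = x7) + of_bool (x5 = x7) + of_bool (x6 = x7)"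

definition chk3 :: "nat \<Rightarrow> nat \<Rightarrow> nat \<Rightarrow> bool" where
  "chk3 u wg wm = ((wg \<le> 16 \<and> (wg = 16 \<longrightarrow> u \<le> 3)) \<and> (wm \<le> 14 \<and> (wm = 14 \<longrightarrow> u \<ge> 4)))"

fun chkL :: "nat list \<Rightarrow> bool" where
  "chkL [x0,x1,x2,x3,x4,x5,x6,x7] =
   (if fE x0 x1 x2 x3 x4 x5 x6 x7 = 4 then chk3 (uE x0 x1 x2 x3 x4 x5 x6 x7) (WG x0 x1 x2 x3 x4 x5 x6 x7) (WM x0 x1 x2 x3 x4 x5 x6 x7) else True)"
| "chkL _ = True"

lemma allchk: "list_all chkL (ext 8 0 [] [])"
  by (simp add: numeral_eq_Suc chk3_def fE_def uE_def WG_def WM_def)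

lemma lenfilt: "length (filter P xs) = sum_list (map (\<lambda>x. of_bool (P x)) xs)"
  by (induction xs) auto

lemma fixc_E: "fixc [x0,x1,x2,x3,x4,x5,x6,x7] = fE x0 x1 x2 x3 x4 x5 x6 x7"
  unfolding fixc_def fE_def by (simp add: upt_rec lenfilt add.assoc)
lemma ul_E: "ul [x0,x1,x2,x3,x4,x5,x6,x7] = uE x0 x1 x2 x3 x4 x5 x6 x7"
  unfolding ul_def uE_def NLG_def by (simp add: lenfilt add.assoc)
lemma wlG_E: "wl NLG [x0,x1,x2,x3,x4,x5,x6,x7] = WG x0 x1 x2 x3 x4 x5 x6 x7"
  unfolding wl_def WG_def NLG_def by (simp add: upt_rec lenfilt add.assoc)
lemma wlM_E: "wl NLM [x0,x1,x2,x3,x4,x5,x6,x7] = WM x0 x1 x2 x3 x4 x5 x6 x7"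
  unfolding wl_def WM_def NLM_def by (simp add: upt_rec lenfilt add.assoc)

lemma lt8: "(a::nat) < 8 \<Longrightarrow> a = 0 \<or> a = 1 \<or> a = 2 \<or> a = 3 \<or> a = 4 \<or> a = 5 \<or> a = 6 \<or> a = 7"
  by auto

lemma nbrsG: "\<forall>a<8. nbrs EG a = set (NLG!a) \<and> distinct (NLG!a) \<and> set (NLG!a) \<subseteq> {0..<8}"
proof (intro allI impI)
  fix a :: nat assume "a < 8"
  then show "nbrs EG a = set (NLG!a) \<and> distinct (NLG!a) \<and> set (NLG!a) \<subseteq> {0..<8}"
    using lt8[OF \<open>a < 8\<close>] by (elim disjE; auto simp: nbrs_def EG_def NLG_def doubleton_eq_iff)
qed

lemma nbrsM: "\<forall>a<8. nbrs EM a = set (NLM!a) \<and> distinct (NLM!a) \<and> set (NLM!a) \<subseteq> {0..<8}"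
proof (intro allI impI)
  fix a :: nat assume "a < 8"
  then show "nbrs EM a = set (NLM!a) \<and> distinct (NLM!a) \<and> set (NLM!a) \<subseteq> {0..<8}"
    using lt8[OF \<open>a < 8\<close>] by (elim disjE; auto simp: nbrs_def EM_def EG_def NLM_def doubleton_eq_iff)
qed


lemma A8: "{0..<8::nat} = {0,1,2,3,4,5,6,7}" by auto

definition P1 :: "nat set set" where "P1 = {{0,2,4,6,7},{1},{3},{5}}"
definition P2 :: "nat set set" where "P2 = {{0,1,3,5,6},{2},{4},{7}}"

lemma P1_part: "partition_on {0..<8} P1"
  unfolding partition_on_def disjoint_def P1_def A8 by auto
lemma P2_part: "partition_on {0..<8} P2"
  unfolding partition_on_def disjoint_def P2_def A8 by auto

lemma P1_Pi: "P1 \<in> Pi_k {0..<8} 4"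
  unfolding Pi_k_def using P1_part by (simp add: P1_def)
lemma P2_Pi: "P2 \<in> Pi_k {0..<8} 4"
  unfolding Pi_k_def using P2_part by (simp add: P2_def)

lemma P1_coal: assumes "a < 8" shows "coalition_of P1 a = (if a \<in> {0,2,4,6,7} then {0,2,4,6,7} else {a})"
proof (rule coal_eq[OF P1_part])
  show "(if a \<in> {0,2,4,6,7} then {0,2,4,6,7} else {a}) \<in> P1"
    using lt8[OF assms] by (elim disjE) (simp_all add: P1_def)
  show "a \<in> (if a \<in> {0,2,4,6,7} then {0,2,4,6,7} else {a})" by simp
qed
lemma P2_coal: assumes "a < 8" shows "coalition_of P2 a = (if a \<in> {0,1,3,5,6} then {0,1,3,5,6} else {a})"
proof (rule coal_eq[OF P2_part])
  show "(if a \<in> {0,1,3,5,6} then {0,1,3,5,6} else {a}) \<in> P2"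
    using lt8[OF assms] by (elim disjE) (simp_all add: P2_def)
  show "a \<in> (if a \<in> {0,1,3,5,6} then {0,1,3,5,6} else {a})" by simp
qed

lemma P1_lab: "\<forall>a<8. \<forall>b<8. (b \<in> coalition_of P1 a \<longleftrightarrow> [0,1,0,3,0,5,0,0::nat]!a = [0,1,0,3,0,5,0,0::nat]!b)"
proof (intro allI impI)
  fix a b :: nat assume a: "a < 8" and b: "b < 8"
  show "(b \<in> coalition_of P1 a \<longleftrightarrow> [0,1,0,3,0,5,0,0::nat]!a = [0,1,0,3,0,5,0,0::nat]!b)"
    unfolding P1_coal[OF a] using lt8[OF a] lt8[OF b] by (elim disjE) simp_all
qed
lemma P2_lab: "\<forall>a<8. \<forall>b<8. (b \<in> coalition_of P2 a \<longleftrightarrow> [0,0,2,0,4,0,0,7::nat]!a = [0,0,2,0,4,0,0,7::nat]!b)"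
proof (intro allI impI)
  fix a b :: nat assume a: "a < 8" and b: "b < 8"
  show "(b \<in> coalition_of P2 a \<longleftrightarrow> [0,0,2,0,4,0,0,7::nat]!a = [0,0,2,0,4,0,0,7::nat]!b)"
    unfolding P2_coal[OF a] using lt8[OF a] lt8[OF b] by (elim disjE) simp_all
qed

lemma P1_w: "welfare {0..<8} EG P1 = 16"
  using welfare_eq[OF P1_part nbrsG P1_lab] by (simp add: wl_def NLG_def upt_rec)
lemma P2_w: "welfare {0..<8} EM P2 = 14"
  using welfare_eq[OF P2_part nbrsM P2_lab] by (simp add: wl_def NLM_def upt_rec)

lemma gen_facts:
  assumes "P \<in> Pi_k {0..<8} 4"
  shows "welfare {0..<8} EG P \<le> 16 \<and> (welfare {0..<8} EG P = 16 \<longrightarrow> util EG P 0 \<le> 3)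
     \<and> welfare {0..<8} EM P \<le> 14 \<and> (welfare {0..<8} EM P = 14 \<longrightarrow> util EG P 0 \<ge> 4)"
proof -
  have part: "partition_on {0..<8} P" and cP: "card P = 4" using assms unfolding Pi_k_def by auto
  define xs where "xs = map (rep P) [0..<8]"
  have "[] @ xs \<in> set (ext (length xs) 0 [] [])"
    using ext_complete[of "[]" xs 0 "[]"] rep_valid[OF part] unfolding xs_def by simp
  then have "xs \<in> set (ext 8 0 [] [])" unfolding xs_def by simp
  then have ck: "chkL xs" using allchk by (simp add: list_all_iff)
  have xs8: "xs = [rep P 0, rep P 1, rep P 2, rep P 3, rep P 4, rep P 5, rep P 6, rep P 7]"
    unfolding xs_def by (simp add: upt_rec numeral_eq_Suc)
  have fx: "fixc xs = 4" using rep_fixc[OF part] cP unfolding xs_def by simp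
  have lab: "\<forall>a<8. \<forall>b<8. (b \<in> coalition_of P a \<longleftrightarrow> xs!a = xs!b)"
    unfolding xs_def using same_iff[OF part] by simp
  have w1: "welfare {0..<8} EG P = wl NLG xs" by (rule welfare_eq[OF part nbrsG lab])
  have w2: "welfare {0..<8} EM P = wl NLM xs" by (rule welfare_eq[OF part nbrsM lab])
  have u0: "util EG P 0 = ul xs" unfolding ul_def using util_eq[OF part nbrsG lab, of 0] by simp
  note defs = ck fx w1 w2 u0
  show ?thesis using defs unfolding xs8 fixc_E ul_E wlG_E wlM_E chkL.simps chk3_def by simp
qed

lemma fin_max: "finite (maxutil {0..<8::nat} E 4)"
proof (rule finite_subset)
  show "maxutil {0..<8::nat} E 4 \<subseteq> Pow (Pow {0..<8})"
    unfolding maxutil_def Pi_k_def partition_on_def by auto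
qed simp

theorem proposition1:
  shows "\<exists>(A :: nat set) (E :: nat set set) (m :: nat) (Em :: nat set set) (k :: nat).
    finite A \<and> A \<noteq> {} \<and> undirected_graph A E \<and> m \<in> A \<and> 0 < k \<and> k \<le> card A \<and>
    minus_manipulation E m Em \<and>
    Min ((\<lambda>P. util E P m) ` maxutil A Em k) > Max ((\<lambda>P. util E P m) ` maxutil A E k)"
proof (intro exI conjI)
  show "finite {0..<8::nat}" by simp
  show "{0..<8::nat} \<noteq> {}" by simp
  show "undirected_graph {0..<8} EG" unfolding undirected_graph_def EG_def A8 by auto
  show "(0::nat) \<in> {0..<8}" by simp
  show "0 < (4::nat)" by simp
  show "4 \<le> card {0..<8::nat}" by simp
  show "minus_manipulation EG 0 EM" unfolding minus_manipulation_def EM_def by auto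
  have m1: "P1 \<in> maxutil {0..<8} EG 4"
    unfolding maxutil_def using P1_Pi P1_w gen_facts by auto
  have m2: "P2 \<in> maxutil {0..<8} EM 4"
    unfolding maxutil_def using P2_Pi P2_w gen_facts by auto
  have u1: "\<forall>P \<in> maxutil {0..<8} EG 4. util EG P 0 \<le> 3"
  proof
    fix P assume P: "P \<in> maxutil {0..<8} EG 4"
    then have "P \<in> Pi_k {0..<8} 4" "welfare {0..<8} EG P1 \<le> welfare {0..<8} EG P"
      using P1_Pi unfolding maxutil_def by auto
    then show "util EG P 0 \<le> 3" using gen_facts P1_w by fastforce
  qed
  have u2: "\<forall>P \<in> maxutil {0..<8} EM 4. util EG P 0 \<ge> 4"
  proof
    fix P assume P: "P \<in> maxutil {0..<8} EM 4"
    then have "P \<in> Pi_k {0..<8} 4" "welfare {0..<8} EM P2 \<le> welfare {0..<8} EM P"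
      using P2_Pi unfolding maxutil_def by auto
    then show "util EG P 0 \<ge> 4" using gen_facts P2_w by fastforce
  qed
  have "Max ((\<lambda>P. util EG P 0) ` maxutil {0..<8} EG 4) \<le> 3"
    using fin_max m1 u1 by (subst Max_le_iff) auto
  moreover have "Min ((\<lambda>P. util EG P 0) ` maxutil {0..<8} EM 4) \<ge> 4"
    using fin_max m2 u2 by (subst Min_ge_iff) auto
  ultimately show "Min ((\<lambda>P. util EG P 0) ` maxutil {0..<8} EM 4) > Max ((\<lambda>P. util EG P 0) ` maxutil {0..<8} EG 4)"
    by simp
qed

end
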